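(* Let $f_0,f_1,\dots,f_m$ be as in the context. Then (a) $f_i(0)-\inf_zf_i(z)\le 3000\pi^2\bar d\epsilon^2/(mL_f)$ for $i=1,\dots,m$, and $f_0(0)-\inf_xf_0(x)\le3000\pi^2\bar d\epsilon^2/L_f$; (b) $\nabla f_i$ is $L_f$-Lipschitz continuous for $i=0,1,\dots,m$; (c) $f_i$ is $\frac{50\pi\epsilon\sqrt{\bar d}}{\sqrt m}$-Lipschitz continuous for $i=1,\dots,m$, and $f_0$ is $50\pi\epsilon\sqrt{m\bar d}$-Lipschitz continuous.
   Context: Fix $\epsilon\in(0,1)$, $L_f>0$, integers $m_1\ge2$, $m_2\ge1$ with $m_1m_2$ even, $m=3m_1m_2$, an odd integer $\bar d\ge5$, $d=m\bar d$; $[z]_j$ is the $j$-th coordinate. $\Psi(u)=0$ ($u\le0$), $\Psi(u)=1-e^{-u^2}$ ($u>0$); $\Phi(v)=4\arctan v+2\pi$. For $z\in\mathbb R^{\bar d}$: $\varphi(z,1)=-\Psi(1)\Phi([z]_1)$, $\varphi(z,j)=\Psi(-[z]_{j-1})\Phi(-[z]_j)-\Psi([z]_{j-1})\Phi([z]_j)$ ($2\le j\le\bar d$); $h_i(z)=\varphi(z,1)+3\sum_{j=1}^{\lfloor\bar d/2\rfloor}\varphi(z,2j)$ for $1\le i\le m/3$, $h_i(z)=\varphi(z,1)$ for $m/3+1\le i\le 2m/3$, $h_i(z)=\varphi(z,1)+3\sum_{j=1}^{\lfloor\bar d/2\rfloor}\varphi(z,2j+1)$ for $2m/3+1\le i\le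 m$. $f_i(z)=\frac{300\pi\epsilon^2}{mL_f}h_i(\frac{\sqrt mL_fz}{150\pi\epsilon})$ for $z\in\mathbb R^{\bar d}$, and $f_0(x)=\sum_{i=1}^mf_i(x_i)$ for $x=(x_1^\top,\dots,x_m^\top)^\top\in\mathbb R^d$, $x_i\in\mathbb R^{\bar d}$. *)

theory Defs
  imports "HOL-Analysis.Analysis"
begin

text \<open>R^dbar is modelled as real^'n with 'n a finite linearly ordered index type,
  CARD('n) = dbar; the j-th coordinate (1-based) is the component at the j-th
  smallest index. R^d = (R^dbar)^m is modelled as real^'n^'m, block i being the
  component at the i-th smallest element of 'm.\<close>

definition Psi :: "real \<Rightarrow> real" where
  "Psi u = (if u \<le> 0 then 0 else 1 - exp (- (u^2)))"

definition Phi :: "real \<Rightarrow> real" where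
  "Phi v = 4 * arctan v + 2 * pi"

definition idx :: "nat \<Rightarrow> 'n::{finite,linorder}" where
  "idx j = sorted_list_of_set (UNIV :: 'n set) ! (j - 1)"

definition pos :: "'n::{finite,linorder} \<Rightarrow> nat" where
  "pos k = card {l. l < k} + 1"

definition crd :: "real^'n::{finite,linorder} \<Rightarrow> nat \<Rightarrow> real" where
  "crd z j = z $ idx j"

definition phi :: "real^'n::{finite,linorder} \<Rightarrow> nat \<Rightarrow> real" where
  "phi z j = (if j = 1 then - Psi 1 * Phi (crd z 1)
     else Psi (- crd z (j - 1)) * Phi (- crd z j) - Psi (crd z (j - 1)) * Phi (crd z j))"

definition hfun :: "nat \<Rightarrow> nat \<Rightarrow> real^'n::{finite,linorder} \<Rightarrow> real" where
  "hfun m i z =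
     (if i \<le> m div 3 then phi z 1 + 3 * (\<Sum>j=1..CARD('n) div 2. phi z (2*j))
      else if i \<le> 2 * m div 3 then phi z 1
      else phi z 1 + 3 * (\<Sum>j=1..CARD('n) div 2. phi z (2*j+1)))"

definition fi :: "real \<Rightarrow> real \<Rightarrow> nat \<Rightarrow> nat \<Rightarrow> real^'n::{finite,linorder} \<Rightarrow> real" where
  "fi eps Lf m i z = 300 * pi * eps^2 / (real m * Lf)
      * hfun m i ((sqrt (real m) * Lf / (150 * pi * eps)) *\<^sub>R z)"

definition f0 :: "real \<Rightarrow> real \<Rightarrow> real^'n::{finite,linorder}^'m::{finite,linorder} \<Rightarrow> real" where
  "f0 eps Lf x = (\<Sum>k\<in>UNIV. fi eps Lf CARD('m) (pos k) (x $ k))"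

end

theory Submission
  imports Defs
begin


lemma lip_deriv:
  fixes f f' :: "real \<Rightarrow> real"
  assumes d: "\<And>x. (f has_real_derivative f' x) (at x)" and b: "\<And>x. \<bar>f' x\<bar> \<le> M"
  shows "\<bar>f u - f v\<bar> \<le> M * \<bar>u - v\<bar>"
proof -
  have *: "\<bar>f b - f a\<bar> \<le> M * \<bar>b - a\<bar>" if ab: "a < b" for a b
  proof -
    obtain z where "f b - f a = (b - a) * f' z" using MVT2[of a b f f'] ab d by blast
    then have "\<bar>f b - f a\<bar> = \<bar>b - a\<bar> * \<bar>f' z\<bar>" by (simp add: abs_mult)
    also have "\<dots> \<le> \<bar>b - a\<bar> * M" using b[of z] by (intro mult_left_mono) auto
    finally show ?thesis by (simp add: mult.commute)
  qed
  show ?thesis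
    using *[of u v] *[of v u] by (cases "u < v"; cases "v < u") (auto simp: abs_minus_commute)
qed

definition F :: "real \<Rightarrow> real" where "F u = 1 - exp (- (u^2))"
definition g :: "real \<Rightarrow> real" where "g u = 2 * u * exp (- (u^2))"
definition dPsi :: "real \<Rightarrow> real" where "dPsi u = g (max u 0)"
definition dPhi :: "real \<Rightarrow> real" where "dPhi v = 4 / (1 + v^2)"

lemma Psi_F: "Psi u = F (max u 0)"
  by (simp add: Psi_def F_def max_def)

lemma exp_sq_ge: "1 + u^2 \<le> exp (u^2)" for u :: real
  using exp_ge_add_one_self[of "u^2"] by simp

lemma F_deriv: "(F has_real_derivative g u) (at u)"
  unfolding F_def g_def
  by (auto intro!: derivative_eq_intros simp: power2_eq_square)

lemma two_abs_le: "2 * \<bar>x\<bar> \<le> 1 + x^2" for x :: real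
proof -
  have "0 \<le> (\<bar>x\<bar> - 1)^2" by simp
  then show ?thesis by (simp add: power2_diff power2_abs)
qed

lemma g_bound: "\<bar>g u\<bar> \<le> 1"
proof -
  have e: "1 + u^2 \<le> exp (u^2)" by (rule exp_sq_ge)
  have "2 * \<bar>u\<bar> \<le> 1 + u^2" by (rule two_abs_le)
  then have "2 * \<bar>u\<bar> \<le> exp (u^2)" using e by linarith
  then show ?thesis unfolding g_def
    by (simp add: abs_mult exp_minus field_simps)
qed

lemma g_nonneg: "u \<ge> 0 \<Longrightarrow> g u \<ge> 0" by (simp add: g_def)

definition g' :: "real \<Rightarrow> real" where "g' u = (2 - 4 * u^2) * exp (- (u^2))"

lemma g_deriv: "(g has_real_derivative g' u) (at u)"
  unfolding g_def g'_def
  by (auto intro!: derivative_eq_intros simp: power2_eq_square algebra_simps)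

lemma g'_bound: "\<bar>g' u\<bar> \<le> 4"
proof -
  have e: "1 + u^2 \<le> exp (u^2)" by (rule exp_sq_ge)
  have "\<bar>2 - 4 * u^2\<bar> \<le> 4 * (1 + u^2)" by (simp add: abs_le_iff)
  moreover have "4 * (1 + u^2) \<le> 4 * exp (u^2)" using mult_left_mono[OF e, of 4] by simp
  ultimately have "\<bar>2 - 4 * u^2\<bar> \<le> 4 * exp (u^2)" by linarith
  then show ?thesis unfolding g'_def
    by (simp add: abs_mult exp_minus field_simps)
qed

lemma max0_lip: "\<bar>max u 0 - max v 0\<bar> \<le> \<bar>u - v\<bar>" for u v :: real
  by (simp add: max_def abs_if)

lemma Psi_lip: "\<bar>Psi u - Psi v\<bar> \<le> \<bar>u - v\<bar>"
proof -
  have "\<bar>F (max u 0) - F (max v 0)\<bar> \<le> 1 * \<bar>max u 0 - max v 0\<bar>"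
    by (rule lip_deriv[OF F_deriv g_bound])
  then show ?thesis using max0_lip[of u v] by (simp add: Psi_F)
qed

lemma dPsi_lip: "\<bar>dPsi u - dPsi v\<bar> \<le> 4 * \<bar>u - v\<bar>"
proof -
  have "\<bar>g (max u 0) - g (max v 0)\<bar> \<le> 4 * \<bar>max u 0 - max v 0\<bar>"
    by (rule lip_deriv[OF g_deriv g'_bound])
  then show ?thesis using max0_lip[of u v] unfolding dPsi_def by linarith
qed

lemma dPsi_bounds: "0 \<le> dPsi u" "dPsi u \<le> 1"
  using g_bound[of "max u 0"] g_nonneg[of "max u 0"] unfolding dPsi_def by auto

lemma Psi_bounds: "0 \<le> Psi u" "Psi u \<le> 1"
  unfolding Psi_def by auto

lemma Psi_deriv: "(Psi has_real_derivative dPsi u) (at u)"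
proof -
  consider "u > 0" | "u < 0" | "u = 0" by linarith
  then show ?thesis
  proof cases
    case 1
    have "(F has_real_derivative dPsi u) (at u)" using F_deriv[of u] 1 by (simp add: dPsi_def)
    then show ?thesis
      by (rule has_field_derivative_transform_within_open[where S="{0<..}"]) (use 1 in \<open>auto simp: Psi_F\<close>)
  next
    case 2
    have "((\<lambda>_. 0) has_real_derivative dPsi u) (at u)" using 2 by (simp add: dPsi_def g_def)
    then show ?thesis
      by (rule has_field_derivative_transform_within_open[where S="{..<0}"]) (use 2 in \<open>auto simp: Psi_def\<close>)
  next
    case 3
    have le: "\<bar>Psi y\<bar> \<le> y^2" for y
    proof -
      have "1 - exp (- (y^2)) \<le> y^2" using exp_ge_add_one_self[of "- (y^2)"] by linarith
      then show ?thesis unfolding Psi_def by auto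
    qed
    have "((\<lambda>y. (Psi y - Psi 0) / (y - 0)) \<longlongrightarrow> 0) (at 0)"
    proof (rule Lim_null_comparison)
      show "\<forall>\<^sub>F y in at 0. norm ((Psi y - Psi 0) / (y - 0)) \<le> \<bar>y\<bar>"
      proof (rule always_eventually, rule allI)
        fix y :: real
        show "norm ((Psi y - Psi 0) / (y - 0)) \<le> \<bar>y\<bar>"
        proof (cases "y = 0")
          case False
          have "\<bar>Psi y\<bar> / \<bar>y\<bar> \<le> y^2 / \<bar>y\<bar>" using le[of y] by (simp add: divide_right_mono)
          also have "\<dots> = \<bar>y\<bar> * \<bar>y\<bar> / \<bar>y\<bar>" by (simp add: power2_eq_square)
          also have "\<dots> = \<bar>y\<bar>" using False by (simp only: nonzero_mult_div_cancel_right abs_eq_0 not_False_eq_True)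
          finally show ?thesis by (simp add: Psi_def[of 0])
        qed simp
      qed
      show "((\<lambda>y. \<bar>y\<bar>) \<longlongrightarrow> 0) (at (0::real))"
        using tendsto_rabs[OF tendsto_ident_at[of "0::real" UNIV]] by simp
    qed
    then show ?thesis using 3 unfolding has_field_derivative_iff by (simp add: dPsi_def g_def)
  qed
qed

lemma Phi_deriv: "(Phi has_real_derivative dPhi v) (at v)"
  unfolding Phi_def dPhi_def
  by (auto intro!: derivative_eq_intros simp: field_simps)

lemma Phi_bounds: "0 < Phi v" "Phi v < 4 * pi"
  using arctan_bounded[of v] unfolding Phi_def by auto

lemma Phi_sum: "Phi (- v) + Phi v = 4 * pi"
  unfolding Phi_def by (simp add: arctan_minus)

lemma dPhi_bounds: "0 < dPhi v" "dPhi v \<le> 4"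
  unfolding dPhi_def by (auto simp: field_simps add_pos_nonneg)

lemma Phi_lip: "\<bar>Phi u - Phi v\<bar> \<le> 4 * \<bar>u - v\<bar>"
proof (rule lip_deriv[OF Phi_deriv])
  show "\<bar>dPhi x\<bar> \<le> 4" for x using dPhi_bounds[of x] by auto
qed

lemma one_plus_sq_ne: "1 + x * x \<noteq> (0::real)"
  by (smt (verit) zero_le_square)

lemma dPhi_lip: "\<bar>dPhi u - dPhi v\<bar> \<le> 4 * \<bar>u - v\<bar>"
proof (rule lip_deriv)
  show "(dPhi has_real_derivative (- 8 * x / (1 + x^2)^2)) (at x)" for x
    unfolding dPhi_def
    by (auto intro!: derivative_eq_intros simp: field_simps power2_eq_square one_plus_sq_ne)
  show "\<bar>- 8 * x / (1 + x^2)^2\<bar> \<le> 4" for x :: real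
  proof -
    have p: "0 < 1 + x^2" by (simp add: add_pos_nonneg)
    have sq: "2 * \<bar>x\<bar> \<le> 1 + x^2" by (rule two_abs_le)
    also have "\<dots> \<le> (1 + x^2)^2" using p by (simp add: power2_eq_square)
    finally have "8 * \<bar>x\<bar> \<le> 4 * (1 + x^2)^2" by linarith
    moreover have "\<bar>- 8 * x / (1 + x^2)^2\<bar> = 8 * \<bar>x\<bar> / (1 + x^2)^2"
      by (simp add: abs_mult abs_divide)
    ultimately show ?thesis using p by (simp add: pos_divide_le_eq)
  qed
qed



definition P :: "real \<Rightarrow> real \<Rightarrow> real" where
  "P a b = Psi (- a) * Phi (- b) - Psi a * Phi b"
definition Pa :: "real \<Rightarrow> real \<Rightarrow> real" where
  "Pa a b = - dPsi (- a) * Phi (- b) - dPsi a * Phi b"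
definition Pb :: "real \<Rightarrow> real \<Rightarrow> real" where
  "Pb a b = - Psi (- a) * dPhi (- b) - Psi a * dPhi b"

lemma tri2: "\<bar>x * p + y * q\<bar> \<le> \<bar>x\<bar> * \<bar>p\<bar> + \<bar>y\<bar> * \<bar>q\<bar>" for x y p q :: real
  by (metis abs_mult abs_triangle_ineq)

lemma Pa_lip_a: "\<bar>Pa a b - Pa a' b\<bar> \<le> 16 * pi * \<bar>a - a'\<bar>"
proof -
  have 1: "\<bar>dPsi (- a') - dPsi (- a)\<bar> \<le> 4 * \<bar>a - a'\<bar>" using dPsi_lip[of "- a'" "- a"] by simp
  have 2: "\<bar>dPsi a' - dPsi a\<bar> \<le> 4 * \<bar>a - a'\<bar>" using dPsi_lip[of a' a] by (simp add: abs_minus_commute)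
  have "Pa a b - Pa a' b = (dPsi (- a') - dPsi (- a)) * Phi (- b) + (dPsi a' - dPsi a) * Phi b"
    by (simp add: Pa_def algebra_simps)
  then have "\<bar>Pa a b - Pa a' b\<bar> \<le> \<bar>dPsi (- a') - dPsi (- a)\<bar> * Phi (- b) + \<bar>dPsi a' - dPsi a\<bar> * Phi b"
    using tri2[of "dPsi (- a') - dPsi (- a)" "Phi (- b)" "dPsi a' - dPsi a" "Phi b"] Phi_bounds(1)[of b] Phi_bounds(1)[of "-b"]
    by simp
  also have "\<dots> \<le> 4 * \<bar>a - a'\<bar> * Phi (- b) + 4 * \<bar>a - a'\<bar> * Phi b"
    using 1 2 Phi_bounds(1)[of b] Phi_bounds(1)[of "-b"] by (intro add_mono mult_right_mono) auto
  also have "\<dots> = 4 * \<bar>a - a'\<bar> * (Phi (- b) + Phi b)" by (simp add: algebra_simps)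
  also have "\<dots> = 16 * pi * \<bar>a - a'\<bar>" using Phi_sum[of b] by simp
  finally show ?thesis .
qed

lemma Pa_lip_b: "\<bar>Pa a b - Pa a b'\<bar> \<le> 8 * \<bar>b - b'\<bar>"
proof -
  have 1: "\<bar>Phi (- b') - Phi (- b)\<bar> \<le> 4 * \<bar>b - b'\<bar>" using Phi_lip[of "- b'" "- b"] by simp
  have 2: "\<bar>Phi b' - Phi b\<bar> \<le> 4 * \<bar>b - b'\<bar>" using Phi_lip[of b' b] by (simp add: abs_minus_commute)
  have "Pa a b - Pa a b' = dPsi (- a) * (Phi (- b') - Phi (- b)) + dPsi a * (Phi b' - Phi b)"
    by (simp add: Pa_def algebra_simps)
  then have "\<bar>Pa a b - Pa a b'\<bar> \<le> \<bar>dPsi (- a)\<bar> * \<bar>Phi (- b') - Phi (- b)\<bar> + \<bar>dPsi a\<bar> * \<bar>Phi b' - Phi b\<bar>"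
    using tri2 by simp
  also have "\<dots> \<le> 1 * (4 * \<bar>b - b'\<bar>) + 1 * (4 * \<bar>b - b'\<bar>)"
    using 1 2 dPsi_bounds[of a] dPsi_bounds[of "-a"] by (intro add_mono mult_mono) auto
  finally show ?thesis by simp
qed

lemma Pb_lip_a: "\<bar>Pb a b - Pb a' b\<bar> \<le> 8 * \<bar>a - a'\<bar>"
proof -
  have 1: "\<bar>Psi (- a') - Psi (- a)\<bar> \<le> \<bar>a - a'\<bar>" using Psi_lip[of "- a'" "- a"] by simp
  have 2: "\<bar>Psi a' - Psi a\<bar> \<le> \<bar>a - a'\<bar>" using Psi_lip[of a' a] by (simp add: abs_minus_commute)
  have "Pb a b - Pb a' b = (Psi (- a') - Psi (- a)) * dPhi (- b) + (Psi a' - Psi a) * dPhi b"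
    by (simp add: Pb_def algebra_simps)
  then have "\<bar>Pb a b - Pb a' b\<bar> \<le> \<bar>Psi (- a') - Psi (- a)\<bar> * \<bar>dPhi (- b)\<bar> + \<bar>Psi a' - Psi a\<bar> * \<bar>dPhi b\<bar>"
    using tri2 by simp
  also have "\<dots> \<le> \<bar>a - a'\<bar> * 4 + \<bar>a - a'\<bar> * 4"
    using 1 2 dPhi_bounds[of b] dPhi_bounds[of "-b"] by (intro add_mono mult_mono) auto
  finally show ?thesis by simp
qed

lemma Pb_lip_b: "\<bar>Pb a b - Pb a b'\<bar> \<le> 8 * \<bar>b - b'\<bar>"
proof -
  have 1: "\<bar>dPhi (- b') - dPhi (- b)\<bar> \<le> 4 * \<bar>b - b'\<bar>" using dPhi_lip[of "- b'" "- b"] by simp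
  have 2: "\<bar>dPhi b' - dPhi b\<bar> \<le> 4 * \<bar>b - b'\<bar>" using dPhi_lip[of b' b] by (simp add: abs_minus_commute)
  have "Pb a b - Pb a b' = Psi (- a) * (dPhi (- b') - dPhi (- b)) + Psi a * (dPhi b' - dPhi b)"
    by (simp add: Pb_def algebra_simps)
  then have "\<bar>Pb a b - Pb a b'\<bar> \<le> \<bar>Psi (- a)\<bar> * \<bar>dPhi (- b') - dPhi (- b)\<bar> + \<bar>Psi a\<bar> * \<bar>dPhi b' - dPhi b\<bar>"
    using tri2 by simp
  also have "\<dots> \<le> 1 * (4 * \<bar>b - b'\<bar>) + 1 * (4 * \<bar>b - b'\<bar>)"
    using 1 2 Psi_bounds[of a] Psi_bounds[of "-a"] by (intro add_mono mult_mono) auto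
  finally show ?thesis by simp
qed

lemma P_lip_a: "\<bar>P a b - P a' b\<bar> \<le> 4 * pi * \<bar>a - a'\<bar>"
proof -
  have 1: "\<bar>Psi (- a) - Psi (- a')\<bar> \<le> \<bar>a - a'\<bar>" using Psi_lip[of "- a" "- a'"] by (simp add: abs_minus_commute)
  have 2: "\<bar>Psi a' - Psi a\<bar> \<le> \<bar>a - a'\<bar>" using Psi_lip[of a' a] by (simp add: abs_minus_commute)
  have "P a b - P a' b = (Psi (- a) - Psi (- a')) * Phi (- b) + (Psi a' - Psi a) * Phi b"
    by (simp add: P_def algebra_simps)
  then have "\<bar>P a b - P a' b\<bar> \<le> \<bar>Psi (- a) - Psi (- a')\<bar> * Phi (- b) + \<bar>Psi a' - Psi a\<bar> * Phi b"
    using tri2[of "Psi (- a) - Psi (- a')" "Phi (- b)" "Psi a' - Psi a" "Phi b"] Phi_bounds(1)[of b] Phi_bounds(1)[of "-b"]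
    by simp
  also have "\<dots> \<le> \<bar>a - a'\<bar> * Phi (- b) + \<bar>a - a'\<bar> * Phi b"
    using 1 2 Phi_bounds(1)[of b] Phi_bounds(1)[of "-b"] by (intro add_mono mult_right_mono) auto
  also have "\<dots> = \<bar>a - a'\<bar> * (Phi (- b) + Phi b)" by (simp add: algebra_simps)
  also have "\<dots> = 4 * pi * \<bar>a - a'\<bar>" using Phi_sum[of b] by simp
  finally show ?thesis .
qed

lemma P_lip_b: "\<bar>P a b - P a b'\<bar> \<le> 8 * \<bar>b - b'\<bar>"
proof -
  have 1: "\<bar>Phi (- b) - Phi (- b')\<bar> \<le> 4 * \<bar>b - b'\<bar>" using Phi_lip[of "- b" "- b'"] by (simp add: abs_minus_commute)
  have 2: "\<bar>Phi b' - Phi b\<bar> \<le> 4 * \<bar>b - b'\<bar>" using Phi_lip[of b' b] by (simp add: abs_minus_commute)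
  have "P a b - P a b' = Psi (- a) * (Phi (- b) - Phi (- b')) + Psi a * (Phi b' - Phi b)"
    by (simp add: P_def algebra_simps)
  then have "\<bar>P a b - P a b'\<bar> \<le> \<bar>Psi (- a)\<bar> * \<bar>Phi (- b) - Phi (- b')\<bar> + \<bar>Psi a\<bar> * \<bar>Phi b' - Phi b\<bar>"
    using tri2 by simp
  also have "\<dots> \<le> 1 * (4 * \<bar>b - b'\<bar>) + 1 * (4 * \<bar>b - b'\<bar>)"
    using 1 2 Psi_bounds[of a] Psi_bounds[of "-a"] by (intro add_mono mult_mono) auto
  finally show ?thesis by simp
qed

lemma P_lip: "\<bar>P a b - P a' b'\<bar> \<le> 4 * pi * (\<bar>a - a'\<bar> + \<bar>b - b'\<bar>)"
proof -
  have "\<bar>P a b - P a' b'\<bar> \<le> \<bar>P a b - P a' b\<bar> + \<bar>P a' b - P a' b'\<bar>" by linarith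
  also have "\<dots> \<le> 4 * pi * \<bar>a - a'\<bar> + 8 * \<bar>b - b'\<bar>" using P_lip_a P_lip_b by (rule add_mono)
  also have "\<dots> \<le> 4 * pi * \<bar>a - a'\<bar> + 4 * pi * \<bar>b - b'\<bar>"
    using pi_gt3 by (intro add_mono mult_right_mono) auto
  finally show ?thesis by (simp add: algebra_simps)
qed

lemma P_lower: "- 4 * pi \<le> P a b"
proof -
  have "0 \<le> Psi (- a) * Phi (- b)" using Psi_bounds Phi_bounds(1)[of "-b"] by simp
  moreover have "Psi a * Phi b \<le> 1 * (4 * pi)"
    using Psi_bounds[of a] Phi_bounds[of b] by (intro mult_mono) auto
  ultimately show ?thesis unfolding P_def by simp
qed

lemma P_00: "P 0 0 = 0" by (simp add: P_def Psi_def)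

lemma alg23:
  fixes x y X Y :: real
  assumes "0 \<le> x" "0 \<le> y" "\<bar>X\<bar> \<le> 16 * pi * x + 8 * y" "\<bar>Y\<bar> \<le> 8 * x + 8 * y"
  shows "X^2 + Y^2 \<le> (23 * pi)^2 * (x^2 + y^2)"
proof -
  have p: "3 \<le> pi" using pi_gt3 by simp
  have "X^2 \<le> (16 * pi * x + 8 * y)^2"
    using assms by (metis abs_ge_zero order_trans power2_abs power_mono)
  moreover have "Y^2 \<le> (8 * x + 8 * y)^2"
    using assms by (metis abs_ge_zero order_trans power2_abs power_mono)
  moreover have "2 * x * y \<le> x^2 + y^2" using sum_squares_bound[of x y] by simp
  moreover have "(16 * pi * x + 8 * y)^2 + (8 * x + 8 * y)^2
      = 256 * pi^2 * x^2 + 64 * y^2 + 64 * x^2 + 64 * y^2 + (128 * pi + 64) * (2 * x * y)"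
    by (simp add: power2_eq_square algebra_simps)
  moreover have "(128 * pi + 64) * (2 * x * y) \<le> (128 * pi + 64) * (x^2 + y^2)"
    using \<open>2 * x * y \<le> x^2 + y^2\<close> p by (intro mult_left_mono) auto
  moreover have pp: "3 * pi \<le> pi^2" using mult_right_mono[OF p, of pi] by (simp add: power2_eq_square)
  moreover have "256 * pi^2 + 64 + 128 * pi + 64 \<le> 529 * pi^2"
    using p pp by linarith
  moreover have "128 * pi + 192 \<le> 529 * pi^2"
    using p pp by linarith
  ultimately have "X^2 + Y^2 \<le> (256 * pi^2 + 64 + 128 * pi + 64) * x^2 + (128 * pi + 192) * y^2"
    by (simp add: algebra_simps)
  also have "\<dots> \<le> 529 * pi^2 * x^2 + 529 * pi^2 * y^2"
    using \<open>256 * pi^2 + 64 + 128 * pi + 64 \<le> 529 * pi^2\<close> \<open>128 * pi + 192 \<le> 529 * pi^2\<close>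
    by (intro add_mono mult_right_mono) auto
  finally show ?thesis by (simp add: power_mult_distrib algebra_simps)
qed

lemma grad_pair_bound:
  "(Pa a b - Pa a' b')^2 + (Pb a b - Pb a' b')^2 \<le> (23 * pi)^2 * ((a - a')^2 + (b - b')^2)"
proof -
  have "\<bar>Pa a b - Pa a' b'\<bar> \<le> \<bar>Pa a b - Pa a' b\<bar> + \<bar>Pa a' b - Pa a' b'\<bar>" by linarith
  also have "\<dots> \<le> 16 * pi * \<bar>a - a'\<bar> + 8 * \<bar>b - b'\<bar>" using Pa_lip_a Pa_lip_b by (rule add_mono)
  finally have X: "\<bar>Pa a b - Pa a' b'\<bar> \<le> 16 * pi * \<bar>a - a'\<bar> + 8 * \<bar>b - b'\<bar>" .
  have "\<bar>Pb a b - Pb a' b'\<bar> \<le> \<bar>Pb a b - Pb a' b\<bar> + \<bar>Pb a' b - Pb a' b'\<bar>" by linarith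
  also have "\<dots> \<le> 8 * \<bar>a - a'\<bar> + 8 * \<bar>b - b'\<bar>" using Pb_lip_a Pb_lip_b by (rule add_mono)
  finally have Y: "\<bar>Pb a b - Pb a' b'\<bar> \<le> 8 * \<bar>a - a'\<bar> + 8 * \<bar>b - b'\<bar>" .
  show ?thesis using alg23[OF abs_ge_zero abs_ge_zero X Y] by (simp only: power2_abs)
qed

lemma Psi_chain[derivative_intros]:
  "(f has_derivative f') (at x within s) \<Longrightarrow>
   ((\<lambda>x. Psi (f x)) has_derivative (\<lambda>h. dPsi (f x) * f' h)) (at x within s)"
  by (rule has_derivative_compose[of f f' x s Psi "(*) (dPsi (f x))", OF _ has_field_derivative_imp_has_derivative[OF Psi_deriv]])

lemma Phi_chain[derivative_intros]:
  "(f has_derivative f') (at x within s) \<Longrightarrow>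
   ((\<lambda>x. Phi (f x)) has_derivative (\<lambda>h. dPhi (f x) * f' h)) (at x within s)"
  by (rule has_derivative_compose[of f f' x s Phi "(*) (dPhi (f x))", OF _ has_field_derivative_imp_has_derivative[OF Phi_deriv]])

lemma nth_deriv: "((\<lambda>z. z $ i) has_derivative (\<lambda>h. h $ i)) FF"
  using bounded_linear.has_derivative[OF bounded_linear_vec_nth[of i] has_derivative_ident[of FF]] by simp

lemma P_deriv:
  "((\<lambda>z::real^'n. P (z $ a) (z $ b)) has_derivative
     (\<lambda>h. Pa (z $ a) (z $ b) * h $ a + Pb (z $ a) (z $ b) * h $ b)) (at z)"
proof -
  have A: "((\<lambda>z::real^'n. Psi (- (z $ a))) has_derivative (\<lambda>h. dPsi (- (z $ a)) * (- (h $ a)))) (at z)"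
    by (rule Psi_chain[OF has_derivative_minus[OF nth_deriv]])
  have B: "((\<lambda>z::real^'n. Phi (- (z $ b))) has_derivative (\<lambda>h. dPhi (- (z $ b)) * (- (h $ b)))) (at z)"
    by (rule Phi_chain[OF has_derivative_minus[OF nth_deriv]])
  have C: "((\<lambda>z::real^'n. Psi (z $ a)) has_derivative (\<lambda>h. dPsi (z $ a) * h $ a)) (at z)"
    by (rule Psi_chain[OF nth_deriv])
  have D: "((\<lambda>z::real^'n. Phi (z $ b)) has_derivative (\<lambda>h. dPhi (z $ b) * h $ b)) (at z)"
    by (rule Phi_chain[OF nth_deriv])
  have E: "((\<lambda>z::real^'n. Psi (- (z $ a)) * Phi (- (z $ b)) - Psi (z $ a) * Phi (z $ b)) has_derivative
     (\<lambda>h. (Psi (- (z $ a)) * (dPhi (- (z $ b)) * (- (h $ b))) + dPsi (- (z $ a)) * (- (h $ a)) * Phi (- (z $ b)))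
        - (Psi (z $ a) * (dPhi (z $ b) * h $ b) + dPsi (z $ a) * h $ a * Phi (z $ b)))) (at z)"
    by (rule has_derivative_diff[OF has_derivative_mult[OF A B] has_derivative_mult[OF C D]])
  show ?thesis unfolding P_def
    by (rule has_derivative_eq_rhs[OF E]) (simp add: fun_eq_iff Pa_def Pb_def algebra_simps)
qed


definition Q :: "('t \<Rightarrow> 'n) \<Rightarrow> ('t \<Rightarrow> 'n) \<Rightarrow> 't set \<Rightarrow> real^'n::finite \<Rightarrow> real" where
  "Q a b S z = (\<Sum>t\<in>S. P (z $ a t) (z $ b t))"
definition GQ :: "('t \<Rightarrow> 'n) \<Rightarrow> ('t \<Rightarrow> 'n) \<Rightarrow> 't set \<Rightarrow> real^'n::finite \<Rightarrow> real^'n" where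
  "GQ a b S z = (\<Sum>t\<in>S. Pa (z $ a t) (z $ b t) *\<^sub>R axis (a t) 1 + Pb (z $ a t) (z $ b t) *\<^sub>R axis (b t) 1)"

lemma inner_pair: "(\<alpha> *\<^sub>R axis i (1::real) + \<beta> *\<^sub>R axis j 1) \<bullet> (h::real^'n::finite) = \<alpha> * h $ i + \<beta> * h $ j"
  by (simp add: inner_add_left inner_axis')

lemma Q_deriv: "((Q a b S) has_derivative (\<lambda>h. GQ a b S z \<bullet> h)) (at z)"
proof -
  have "((\<lambda>z. \<Sum>t\<in>S. P (z $ a t) (z $ b t)) has_derivative
      (\<lambda>h. \<Sum>t\<in>S. Pa (z $ a t) (z $ b t) * h $ a t + Pb (z $ a t) (z $ b t) * h $ b t)) (at z)"
    by (rule has_derivative_sum) (rule P_deriv)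
  then show ?thesis unfolding Q_def[abs_def]
    by (rule has_derivative_eq_rhs) (simp add: fun_eq_iff GQ_def inner_sum_left inner_pair)
qed

lemma norm_sq_vec: "(norm (x::real^'n::finite))^2 = (\<Sum>i\<in>UNIV. (x $ i)^2)"
  by (simp add: norm_vec_def L2_set_def sum_nonneg)

lemma sum_pairs_le:
  fixes f :: "'n::finite \<Rightarrow> real"
  assumes "finite S" "inj_on a S" "inj_on b S" "\<And>s t. s \<in> S \<Longrightarrow> t \<in> S \<Longrightarrow> a s \<noteq> b t" "\<And>k. 0 \<le> f k"
  shows "(\<Sum>t\<in>S. f (a t) + f (b t)) \<le> (\<Sum>k\<in>UNIV. f k)"
proof -
  have "(\<Sum>t\<in>S. f (a t) + f (b t)) = (\<Sum>k\<in>a ` S. f k) + (\<Sum>k\<in>b ` S. f k)"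
    by (simp add: sum.distrib sum.reindex[OF assms(2)] sum.reindex[OF assms(3)])
  also have "\<dots> = (\<Sum>k\<in>a ` S \<union> b ` S. f k)"
    by (rule sum.union_disjoint[symmetric]) (use assms in auto)
  also have "\<dots> \<le> (\<Sum>k\<in>UNIV. f k)"
    by (rule sum_mono2) (use assms in auto)
  finally show ?thesis .
qed

lemma GQ_lip:
  assumes S: "finite S" and ia: "inj_on a S" and ib: "inj_on b S"
    and ab: "\<And>s t. s \<in> S \<Longrightarrow> t \<in> S \<Longrightarrow> a s \<noteq> b t"
  shows "norm (GQ a b S z - GQ a b S w) \<le> 23 * pi * norm (z - w)"
proof -
  define da where "da t = Pa (z $ a t) (z $ b t) - Pa (w $ a t) (w $ b t)" for t
  define db where "db t = Pb (z $ a t) (z $ b t) - Pb (w $ a t) (w $ b t)" for t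
  define u where "u t = da t *\<^sub>R axis (a t) (1::real) + db t *\<^sub>R axis (b t) 1" for t
  have eq: "GQ a b S z - GQ a b S w = (\<Sum>t\<in>S. u t)"
    unfolding GQ_def sum_subtractf[symmetric]
    by (rule sum.cong) (auto simp: u_def da_def db_def scaleR_diff_left algebra_simps)
  have ab2: "b t \<noteq> a s" if "s \<in> S" "t \<in> S" for s t using ab[OF that] by metis
  have orth: "pairwise (\<lambda>s t. orthogonal (u s) (u t)) S"
    unfolding pairwise_def orthogonal_def u_def
    using ia ib by (auto simp: inner_add_left inner_add_right inner_axis_axis inj_on_def ab ab2)
  have nu: "(norm (u t))^2 = (da t)^2 + (db t)^2" if "t \<in> S" for t
    using ab[OF that that] unfolding power2_norm_eq_inner u_def
    by (simp add: inner_add_left inner_add_right inner_axis_axis power2_eq_square)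
  have "(norm (GQ a b S z - GQ a b S w))^2 = (\<Sum>t\<in>S. (norm (u t))^2)"
    using norm_sum_Pythagorean[OF S orth] eq by simp
  also have "\<dots> = (\<Sum>t\<in>S. (da t)^2 + (db t)^2)" using nu by (rule sum.cong[OF refl])
  also have "\<dots> \<le> (\<Sum>t\<in>S. (23 * pi)^2 * (((z - w) $ a t)^2 + ((z - w) $ b t)^2))"
    unfolding da_def db_def vector_minus_component by (rule sum_mono) (rule grad_pair_bound)
  also have "\<dots> = (23 * pi)^2 * (\<Sum>t\<in>S. ((z - w) $ a t)^2 + ((z - w) $ b t)^2)"
    by (simp add: sum_distrib_left)
  also have "\<dots> \<le> (23 * pi)^2 * (\<Sum>k\<in>UNIV. ((z - w) $ k)^2)"
    by (rule mult_left_mono[OF sum_pairs_le]) (use assms in auto)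
  also have "\<dots> = (23 * pi * norm (z - w))^2"
    by (simp add: norm_sq_vec power_mult_distrib)
  finally show ?thesis
    by (rule power2_le_imp_le) (use pi_gt_zero in auto)
qed

lemma Q_lip:
  assumes S: "finite S" and ia: "inj_on a S" and ib: "inj_on b S"
    and ab: "\<And>s t. s \<in> S \<Longrightarrow> t \<in> S \<Longrightarrow> a s \<noteq> b t"
  shows "\<bar>Q a b S z - Q a b S w\<bar> \<le> 4 * pi * (\<Sum>k\<in>UNIV. \<bar>z $ k - w $ k\<bar>)"
proof -
  have "\<bar>Q a b S z - Q a b S w\<bar> = \<bar>\<Sum>t\<in>S. P (z $ a t) (z $ b t) - P (w $ a t) (w $ b t)\<bar>"
    by (simp add: Q_def sum_subtractf)
  also have "\<dots> \<le> (\<Sum>t\<in>S. \<bar>P (z $ a t) (z $ b t) - P (w $ a t) (w $ b t)\<bar>)"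
    by (rule sum_abs)
  also have "\<dots> \<le> (\<Sum>t\<in>S. 4 * pi * (\<bar>z $ a t - w $ a t\<bar> + \<bar>z $ b t - w $ b t\<bar>))"
    by (rule sum_mono) (rule P_lip)
  also have "\<dots> = 4 * pi * (\<Sum>t\<in>S. \<bar>z $ a t - w $ a t\<bar> + \<bar>z $ b t - w $ b t\<bar>)"
    by (simp add: sum_distrib_left)
  also have "\<dots> \<le> 4 * pi * (\<Sum>k\<in>UNIV. \<bar>z $ k - w $ k\<bar>)"
    by (rule mult_left_mono[OF sum_pairs_le[where f="\<lambda>k. \<bar>z $ k - w $ k\<bar>"]]) (use assms in auto)
  finally show ?thesis .
qed

lemma l1_le: "(\<Sum>k\<in>UNIV. \<bar>(x::real^'n::finite) $ k\<bar>) \<le> sqrt (real CARD('n)) * norm x"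
proof -
  have n: "norm x = L2_set (\<lambda>k. x $ k) UNIV" by (simp add: norm_vec_def L2_set_def)
  show ?thesis
    using L2_set_mult_ineq[of "\<lambda>k. x $ k" "\<lambda>_. 1" UNIV] by (simp add: n L2_set_constant mult.commute)
qed

definition R :: "'n \<Rightarrow> ('t \<Rightarrow> 'n) \<Rightarrow> ('t \<Rightarrow> 'n) \<Rightarrow> 't set \<Rightarrow> real^'n::finite \<Rightarrow> real" where
  "R c a b S z = - Psi 1 * Phi (z $ c) + 3 * Q a b S z"
definition GR :: "'n \<Rightarrow> ('t \<Rightarrow> 'n) \<Rightarrow> ('t \<Rightarrow> 'n) \<Rightarrow> 't set \<Rightarrow> real^'n::finite \<Rightarrow> real^'n" where
  "GR c a b S z = (- Psi 1 * dPhi (z $ c)) *\<^sub>R axis c 1 + 3 *\<^sub>R GQ a b S z"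

lemma R_deriv: "((R c a b S) has_derivative (\<lambda>h. GR c a b S z \<bullet> h)) (at z)"
proof -
  have A: "((\<lambda>z. - Psi 1 * Phi (z $ c)) has_derivative (\<lambda>h. - Psi 1 * (dPhi (z $ c) * h $ c))) (at z)"
    by (rule has_derivative_mult_right[OF Phi_chain[OF nth_deriv]])
  have B: "((\<lambda>z. 3 * Q a b S z) has_derivative (\<lambda>h. 3 * (GQ a b S z \<bullet> h))) (at z)"
    by (rule has_derivative_mult_right[OF Q_deriv])
  show ?thesis unfolding R_def[abs_def]
    by (rule has_derivative_eq_rhs[OF has_derivative_add[OF A B]])
       (simp add: fun_eq_iff GR_def inner_add_left inner_diff_left inner_axis' algebra_simps)
qed

lemma GR_lip:
  assumes S: "finite S" and ia: "inj_on a S" and ib: "inj_on b S"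
    and ab: "\<And>s t. s \<in> S \<Longrightarrow> t \<in> S \<Longrightarrow> a s \<noteq> b t"
  shows "norm (GR c a b S z - GR c a b S w) \<le> 75 * pi * norm (z - w)"
proof -
  have eq: "GR c a b S z - GR c a b S w
      = (- Psi 1 * (dPhi (z $ c) - dPhi (w $ c))) *\<^sub>R axis c 1 + 3 *\<^sub>R (GQ a b S z - GQ a b S w)"
    by (simp add: GR_def algebra_simps)
  have c: "\<bar>z $ c - w $ c\<bar> \<le> norm (z - w)" using Finite_Cartesian_Product.norm_nth_le[of "z - w" c] by simp
  have "norm (GR c a b S z - GR c a b S w)
      \<le> norm ((- Psi 1 * (dPhi (z $ c) - dPhi (w $ c))) *\<^sub>R axis c (1::real)) + norm (3 *\<^sub>R (GQ a b S z - GQ a b S w))"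
    unfolding eq by (rule norm_triangle_ineq)
  also have "\<dots> = Psi 1 * \<bar>dPhi (z $ c) - dPhi (w $ c)\<bar> + 3 * norm (GQ a b S z - GQ a b S w)"
    using Psi_bounds[of 1] by (simp add: abs_mult)
  also have "\<dots> \<le> 1 * (4 * norm (z - w)) + 3 * (23 * pi * norm (z - w))"
    using Psi_bounds[of 1] dPhi_lip[of "z $ c" "w $ c"] c GQ_lip[OF assms, of z w]
    by (intro add_mono mult_mono mult_left_mono) auto
  also have "\<dots> \<le> 75 * pi * norm (z - w)"
  proof -
    have "4 * norm (z - w) \<le> 6 * pi * norm (z - w)" using pi_gt3 by (intro mult_right_mono) auto
    then show ?thesis by (simp add: algebra_simps)
  qed
  finally show ?thesis .
qed

lemma R_lip:
  fixes z w :: "real^'n::finite"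
  assumes S: "finite S" and ia: "inj_on a S" and ib: "inj_on b S"
    and ab: "\<And>s t. s \<in> S \<Longrightarrow> t \<in> S \<Longrightarrow> a s \<noteq> b t"
  shows "\<bar>R c a b S z - R c a b S w\<bar> \<le> (4 + 12 * pi) * sqrt (real CARD('n)) * norm (z - w)"
proof -
  have c: "\<bar>z $ c - w $ c\<bar> \<le> norm (z - w)" using Finite_Cartesian_Product.norm_nth_le[of "z - w" c] by simp
  have s1: "1 \<le> sqrt (real CARD('n))" by simp
  have l1: "(\<Sum>k\<in>UNIV. \<bar>z $ k - w $ k\<bar>) \<le> sqrt (real CARD('n)) * norm (z - w)"
    using l1_le[of "z - w"] by simp
  have "R c a b S z - R c a b S w = - Psi 1 * (Phi (z $ c) - Phi (w $ c)) + 3 * (Q a b S z - Q a b S w)"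
    by (simp add: R_def algebra_simps)
  then have "\<bar>R c a b S z - R c a b S w\<bar> \<le> \<bar>- Psi 1 * (Phi (z $ c) - Phi (w $ c))\<bar> + \<bar>3 * (Q a b S z - Q a b S w)\<bar>"
    by (simp only: abs_triangle_ineq)
  also have "\<dots> = Psi 1 * \<bar>Phi (z $ c) - Phi (w $ c)\<bar> + 3 * \<bar>Q a b S z - Q a b S w\<bar>"
    by (simp only: abs_mult abs_minus_cancel abs_numeral abs_of_nonneg[OF Psi_bounds(1)])
  also have "\<dots> \<le> 1 * (4 * norm (z - w)) + 3 * (4 * pi * (sqrt (real CARD('n)) * norm (z - w)))"
  proof -
    have "4 * pi * (\<Sum>k\<in>UNIV. \<bar>z $ k - w $ k\<bar>) \<le> 4 * pi * (sqrt (real CARD('n)) * norm (z - w))"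
      using l1 pi_gt_zero by (intro mult_left_mono) auto
    then have q: "\<bar>Q a b S z - Q a b S w\<bar> \<le> 4 * pi * (sqrt (real CARD('n)) * norm (z - w))"
      using Q_lip[OF assms, of z w] by linarith
    show ?thesis
      using Psi_bounds[of 1] Phi_lip[of "z $ c" "w $ c"] c q
      by (intro add_mono mult_mono mult_left_mono) auto
  qed
  also have "\<dots> \<le> 4 * sqrt (real CARD('n)) * norm (z - w) + 12 * pi * sqrt (real CARD('n)) * norm (z - w)"
    using s1 by (simp add: mult_right_mono)
  also have "\<dots> = (4 + 12 * pi) * sqrt (real CARD('n)) * norm (z - w)"
    by (simp add: algebra_simps)
  finally show ?thesis .
qed

lemma R_gap:
  assumes "finite S"
  shows "R c a b S 0 - R c a b S z \<le> 2 * pi + 12 * pi * real (card S)"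
proof -
  have A: "R c a b S 0 = - 2 * (pi * Psi 1)" by (simp add: R_def Q_def P_00 Phi_def)
  have "Psi 1 * Phi (z $ c) \<le> Psi 1 * (4 * pi)"
    using Psi_bounds[of 1] Phi_bounds[of "z $ c"] by (intro mult_left_mono) auto
  moreover have "(\<Sum>t\<in>S. - 4 * pi) \<le> Q a b S z" unfolding Q_def by (rule sum_mono) (rule P_lower)
  ultimately have B: "- 4 * (pi * Psi 1) - 12 * (pi * real (card S)) \<le> R c a b S z"
    unfolding R_def by (simp add: algebra_simps)
  have C: "pi * Psi 1 \<le> pi * 1" using Psi_bounds[of 1] pi_gt_zero by (intro mult_left_mono) auto
  have "R c a b S 0 - R c a b S z \<le> 2 * pi + 12 * (pi * real (card S))"
    using A B C by linarith
  then show ?thesis by (simp add: mult.assoc)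
qed


lemma idx_eq:
  assumes "i \<in> {1..CARD('n)}" "j \<in> {1..CARD('n)}" "(idx i :: 'n::{finite,linorder}) = idx j"
  shows "i = j"
proof -
  let ?L = "sorted_list_of_set (UNIV :: 'n set)"
  have d: "distinct ?L" by simp
  have l: "length ?L = CARD('n)" by simp
  have "?L ! (i - 1) = ?L ! (j - 1)" using assms(3) by (simp add: idx_def)
  then have "i - 1 = j - 1" using nth_eq_iff_index_eq[OF d, of "i - 1" "j - 1"] assms(1,2) l by auto
  then show ?thesis using assms(1,2) by auto
qed

lemma phi_pair: "j \<noteq> 1 \<Longrightarrow> phi z j = P (z $ idx (j - 1)) (z $ idx j)"
  by (simp add: phi_def P_def crd_def)

lemma phi_one: "phi z 1 = - Psi 1 * Phi (z $ idx 1)"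
  by (simp add: phi_def crd_def)

lemma phi_one': "phi z (Suc 0) = - Psi 1 * Phi (z $ idx (Suc 0))"
  by (simp add: phi_def crd_def)

lemma inj_idx_comp:
  assumes "\<And>t. t \<in> S \<Longrightarrow> p t \<in> {1..CARD('n::{finite,linorder})}" "inj_on p S"
  shows "inj_on (\<lambda>t. idx (p t) :: 'n) S"
  unfolding inj_on_def
proof (intro ballI impI)
  fix x y assume xy: "x \<in> S" "y \<in> S" "(idx (p x) :: 'n) = idx (p y)"
  then have "p x = p y" using idx_eq[of "p x" "p y"] assms(1) by blast
  then show "x = y" using assms(2) xy by (auto simp: inj_on_def)
qed

lemma disj_idx_comp:
  assumes "\<And>t. t \<in> S \<Longrightarrow> p t \<in> {1..CARD('n::{finite,linorder})}"
    "\<And>t. t \<in> S \<Longrightarrow> q t \<in> {1..CARD('n)}" "\<forall>s\<in>S. \<forall>t\<in>S. p s \<noteq> q t"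
  shows "\<forall>s\<in>S. \<forall>t\<in>S. (idx (p s) :: 'n) \<noteq> idx (q t)"
  using assms idx_eq by metis

lemma hfun_R:
  assumes odd: "odd CARD('n::{finite,linorder})"
  shows "\<exists>(a::nat \<Rightarrow> 'n::{finite,linorder}) b S. finite S \<and> inj_on a S \<and> inj_on b S \<and> (\<forall>s\<in>S. \<forall>t\<in>S. a s \<noteq> b t)
     \<and> card S \<le> CARD('n) div 2 \<and> (\<forall>z::real^'n::{finite,linorder}. hfun m i z = R (idx 1) a b S z)"
proof -
  let ?n = "CARD('n)"
  let ?S = "{1..?n div 2}"
  have odd2: "2 * (?n div 2) + 1 = ?n" using odd by simp
  consider (A) "i \<le> m div 3" | (B) "\<not> i \<le> m div 3" "i \<le> 2 * m div 3" | (C) "\<not> i \<le> m div 3" "\<not> i \<le> 2 * m div 3"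
    by blast
  then show ?thesis
  proof cases
    case A
    define a where "a t = (idx (2 * t - 1) :: 'n)" for t
    define b where "b t = (idx (2 * t) :: 'n)" for t
    have le: "2 * (?n div 2) \<le> ?n" by simp
    have ia: "inj_on a ?S"
      unfolding a_def by (rule inj_idx_comp) (use le in \<open>auto simp: inj_on_def\<close>)
    have ib: "inj_on b ?S"
      unfolding b_def by (rule inj_idx_comp) (use le in \<open>auto simp: inj_on_def\<close>)
    have ab: "\<forall>s\<in>?S. \<forall>t\<in>?S. a s \<noteq> b t"
      unfolding a_def b_def by (rule disj_idx_comp) (use le in \<open>auto, presburger\<close>)
    have h: "hfun m i z = R (idx 1) a b ?S z" for z :: "real^'n::{finite,linorder}"
      using A by (simp add: hfun_def R_def Q_def phi_one phi_one' phi_pair a_def b_def)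
    show ?thesis using ia ib ab h by (intro exI[of _ a] exI[of _ b] exI[of _ ?S]) auto
  next
    case B
    have h: "hfun m i z = R (idx 1) (\<lambda>_. idx 1) (\<lambda>_. idx 1) {} z" for z :: "real^'n::{finite,linorder}"
      using B by (simp add: hfun_def R_def Q_def phi_one phi_one')
    show ?thesis using h by (intro exI[of _ "\<lambda>_::nat. idx 1 :: 'n"] exI[of _ "\<lambda>_::nat. idx 1 :: 'n"] exI[of _ "{}::nat set"]) auto
  next
    case C
    define a where "a t = (idx (2 * t) :: 'n)" for t
    define b where "b t = (idx (2 * t + 1) :: 'n)" for t
    have ia: "inj_on a ?S"
      unfolding a_def by (rule inj_idx_comp) (use odd2 in \<open>auto simp: inj_on_def\<close>)
    have ib: "inj_on b ?S"
      unfolding b_def by (rule inj_idx_comp) (use odd2 in \<open>auto simp: inj_on_def\<close>)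
    have ab: "\<forall>s\<in>?S. \<forall>t\<in>?S. a s \<noteq> b t"
      unfolding a_def b_def by (rule disj_idx_comp) (use odd2 in \<open>auto, presburger\<close>)
    have h: "hfun m i z = R (idx 1) a b ?S z" for z :: "real^'n::{finite,linorder}"
      using C by (simp add: hfun_def R_def Q_def phi_one phi_one' phi_pair a_def b_def)
    show ?thesis using ia ib ab h by (intro exI[of _ a] exI[of _ b] exI[of _ ?S]) auto
  qed
qed


lemma fi_consts:
  fixes eps Lf :: real and m :: nat
  assumes "0 < eps" "0 < Lf" "0 < m"
  defines "c \<equiv> 300 * pi * eps^2 / (real m * Lf)" and "s \<equiv> sqrt (real m) * Lf / (150 * pi * eps)"
  shows "c * s = 2 * eps / sqrt (real m)" "c * s * s * (75 * pi) = Lf" "0 < c" "0 < s"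
proof -
  have m: "0 < real m" using assms by simp
  have sm: "sqrt (real m) * sqrt (real m) = real m" using m by simp
  have sp: "0 < sqrt (real m)" using m by simp
  show cs: "c * s = 2 * eps / sqrt (real m)"
  proof -
    have "c * s = 2 * eps * sqrt (real m) / real m"
      unfolding c_def s_def using assms pi_gt_zero by (simp add: field_simps power2_eq_square)
    also have "\<dots> = 2 * eps / sqrt (real m)"
      using sp by (subst sm[symmetric]) (simp add: field_simps)
    finally show ?thesis .
  qed
  show "c * s * s * (75 * pi) = Lf"
  proof -
    have "c * s * s * (75 * pi) = 2 * eps / sqrt (real m) * (sqrt (real m) * Lf / (150 * pi * eps)) * (75 * pi)"
      using cs by (simp add: s_def)
    also have "\<dots> = Lf" using sp assms pi_gt_zero by (simp add: field_simps)
    finally show ?thesis .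
  qed
  show "0 < c" unfolding c_def using assms pi_gt_zero by simp
  show "0 < s" unfolding s_def using assms pi_gt_zero by simp
qed


lemma fi_props:
  fixes eps Lf :: real and m i :: nat
  assumes eps: "0 < eps" and L: "0 < Lf" and m: "0 < m" and odd: "odd CARD('n::{finite,linorder})"
  shows "\<exists>G::real^'n::{finite,linorder} \<Rightarrow> real^'n::{finite,linorder}. (\<forall>z. (fi eps Lf m i has_derivative (\<lambda>h. G z \<bullet> h)) (at z)) \<and> Lf-lipschitz_on UNIV G"
    and "(50 * pi * eps * sqrt (real CARD('n::{finite,linorder})) / sqrt (real m))-lipschitz_on UNIV (fi eps Lf m i :: real^'n::{finite,linorder} \<Rightarrow> real)"
    and "fi eps Lf m i (0::real^'n::{finite,linorder}) - fi eps Lf m i (z::real^'n::{finite,linorder}) \<le> 3000 * pi^2 * real CARD('n::{finite,linorder}) * eps^2 / (real m * Lf)"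
proof -
  obtain a b :: "nat \<Rightarrow> 'n::{finite,linorder}" and S :: "nat set" where S: "finite S" and ia: "inj_on a S" and ib: "inj_on b S"
    and ab: "\<forall>s\<in>S. \<forall>t\<in>S. a s \<noteq> b t" and cS: "card S \<le> CARD('n::{finite,linorder}) div 2"
    and h: "\<And>z::real^'n::{finite,linorder}. hfun m i z = R (idx 1) a b S z"
    using hfun_R[OF odd, of m i] by blast
  have ab': "\<And>s t. s \<in> S \<Longrightarrow> t \<in> S \<Longrightarrow> a s \<noteq> b t" using ab by blast
  define c where "c = 300 * pi * eps^2 / (real m * Lf)"
  define s where "s = sqrt (real m) * Lf / (150 * pi * eps)"
  note K = fi_consts[OF eps L m, folded c_def s_def]
  have c0: "0 < c" and s0: "0 < s" using K by auto
  have fe: "fi eps Lf m i = (\<lambda>z. c * R (idx 1) a b S (s *\<^sub>R z))"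
    by (rule ext) (simp add: fi_def c_def s_def h)
  define G where "G z = (c * s) *\<^sub>R GR (idx 1) a b S (s *\<^sub>R z)" for z :: "real^'n::{finite,linorder}"
  have der: "(fi eps Lf m i has_derivative (\<lambda>h. G z \<bullet> h)) (at z)" for z
  proof -
    have d1: "((\<lambda>z::real^'n::{finite,linorder}. s *\<^sub>R z) has_derivative (\<lambda>v. s *\<^sub>R v)) (at z)"
      by (rule has_derivative_scaleR_right[OF has_derivative_ident])
    have d2: "((\<lambda>z. R (idx 1) a b S (s *\<^sub>R z)) has_derivative (\<lambda>v. GR (idx 1) a b S (s *\<^sub>R z) \<bullet> (s *\<^sub>R v))) (at z)"
      by (rule has_derivative_compose[OF d1 R_deriv])
    have d3: "((\<lambda>z. c * R (idx 1) a b S (s *\<^sub>R z)) has_derivative (\<lambda>v. c * (GR (idx 1) a b S (s *\<^sub>R z) \<bullet> (s *\<^sub>R v)))) (at z)"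
      by (rule has_derivative_mult_right[OF d2])
    show ?thesis unfolding fe
      by (rule has_derivative_eq_rhs[OF d3]) (simp add: fun_eq_iff G_def algebra_simps)
  qed
  have glip: "Lf-lipschitz_on UNIV G"
  proof (rule lipschitz_onI)
    fix x y :: "real^'n::{finite,linorder}"
    have "dist (G x) (G y) = c * s * norm (GR (idx 1) a b S (s *\<^sub>R x) - GR (idx 1) a b S (s *\<^sub>R y))"
      using c0 s0 by (simp add: G_def dist_norm scaleR_diff_right[symmetric])
    also have "\<dots> \<le> c * s * (75 * pi * norm (s *\<^sub>R x - s *\<^sub>R y))"
      using c0 s0 GR_lip[OF S ia ib ab'] by (intro mult_left_mono) auto
    also have "\<dots> = c * s * s * (75 * pi) * norm (x - y)"
      using s0 by (simp add: scaleR_diff_right[symmetric])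
    also have "\<dots> = Lf * dist x y" using K(2) by (simp add: dist_norm)
    finally show "dist (G x) (G y) \<le> Lf * dist x y" .
  qed (use L in auto)
  show "\<exists>G::real^'n::{finite,linorder} \<Rightarrow> real^'n::{finite,linorder}. (\<forall>z. (fi eps Lf m i has_derivative (\<lambda>h. G z \<bullet> h)) (at z)) \<and> Lf-lipschitz_on UNIV G"
    using der glip by blast
  show "(50 * pi * eps * sqrt (real CARD('n::{finite,linorder})) / sqrt (real m))-lipschitz_on UNIV (fi eps Lf m i :: real^'n::{finite,linorder} \<Rightarrow> real)"
  proof (rule lipschitz_onI)
    fix x y :: "real^'n::{finite,linorder}"
    have "dist (fi eps Lf m i x) (fi eps Lf m i y) = c * \<bar>R (idx 1) a b S (s *\<^sub>R x) - R (idx 1) a b S (s *\<^sub>R y)\<bar>"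
      using c0 by (simp add: fe dist_real_def right_diff_distrib[symmetric] abs_mult)
    also have "\<dots> \<le> c * ((4 + 12 * pi) * sqrt (real CARD('n::{finite,linorder})) * norm (s *\<^sub>R x - s *\<^sub>R y))"
      using c0 R_lip[OF S ia ib ab'] by (intro mult_left_mono) auto
    also have "\<dots> = (c * s) * (4 + 12 * pi) * sqrt (real CARD('n::{finite,linorder})) * norm (x - y)"
      using s0 by (simp add: scaleR_diff_right[symmetric])
    also have "\<dots> \<le> (c * s) * (50 * pi / 2) * sqrt (real CARD('n::{finite,linorder})) * norm (x - y)"
      using c0 s0 pi_gt3 by (intro mult_right_mono mult_left_mono) auto
    also have "\<dots> = 50 * pi * eps * sqrt (real CARD('n::{finite,linorder})) / sqrt (real m) * dist x y"
      using K(1) by (simp add: dist_norm)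
    finally show "dist (fi eps Lf m i x) (fi eps Lf m i y) \<le> 50 * pi * eps * sqrt (real CARD('n::{finite,linorder})) / sqrt (real m) * dist x y" .
  qed (use eps pi_gt_zero in auto)
  show "fi eps Lf m i (0::real^'n::{finite,linorder}) - fi eps Lf m i z \<le> 3000 * pi^2 * real CARD('n::{finite,linorder}) * eps^2 / (real m * Lf)"
  proof -
    have n1: "1 \<le> real CARD('n::{finite,linorder})" by simp
    have "fi eps Lf m i (0::real^'n::{finite,linorder}) - fi eps Lf m i z = c * (R (idx 1) a b S 0 - R (idx 1) a b S (s *\<^sub>R z))"
      by (simp add: fe right_diff_distrib)
    also have "\<dots> \<le> c * (2 * pi + 12 * pi * real (card S))"
      using c0 R_gap[OF S] by (intro mult_left_mono) auto
    also have "\<dots> \<le> c * (10 * pi * real CARD('n::{finite,linorder}))"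
    proof -
      have "2 * real (card S) \<le> real CARD('n::{finite,linorder})" using cS by linarith
      then have "12 * pi * real (card S) \<le> 6 * pi * real CARD('n::{finite,linorder})" using pi_gt_zero by simp
      moreover have "2 * pi \<le> 4 * pi * real CARD('n::{finite,linorder})"
      proof -
        have "2 * pi * 1 \<le> 2 * pi * (2 * real CARD('n::{finite,linorder}))"
          by (intro mult_left_mono; use n1 pi_gt_zero in linarith)
        then show ?thesis by simp
      qed
      ultimately have "2 * pi + 12 * pi * real (card S) \<le> 10 * pi * real CARD('n::{finite,linorder})"
        by linarith
      then show ?thesis using c0 by (intro mult_left_mono) auto
    qed
    also have "\<dots> = 3000 * pi^2 * real CARD('n::{finite,linorder}) * eps^2 / (real m * Lf)"
      by (simp add: c_def power2_eq_square)
    finally show ?thesis .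
  qed
qed


lemma norm_sq_vec2: "(norm (x::('a::real_normed_vector)^'k::finite))^2 = (\<Sum>i\<in>UNIV. (norm (x $ i))^2)"
  by (simp add: norm_vec_def L2_set_def sum_nonneg)

theorem lemma2:
  fixes eps Lf :: real and m1 m2 :: nat
  assumes "0 < eps" "eps < 1" "0 < Lf"
    and "m1 \<ge> 2" "m2 \<ge> 1" "even (m1 * m2)"
    and "CARD('m) = 3 * m1 * m2"
    and "odd CARD('n)" "CARD('n) \<ge> 5"
  shows
    "(\<forall>i\<in>{1..CARD('m)}.
        fi eps Lf CARD('m) i (0::real^('n::{finite,linorder})) - (INF z. fi eps Lf CARD('m) i (z::real^('n::{finite,linorder})))
          \<le> 3000 * pi^2 * real CARD('n) * eps^2 / (real CARD('m) * Lf))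
     \<and> f0 eps Lf (0::real^('n::{finite,linorder})^('m::{finite,linorder})) - (INF x. f0 eps Lf (x::real^('n::{finite,linorder})^('m::{finite,linorder})))
          \<le> 3000 * pi^2 * real CARD('n) * eps^2 / Lf
     \<and> (\<forall>i\<in>{1..CARD('m)}. \<exists>G :: real^('n::{finite,linorder}) \<Rightarrow> real^('n::{finite,linorder}).
          (\<forall>z. (fi eps Lf CARD('m) i has_derivative (\<lambda>h. G z \<bullet> h)) (at z))
          \<and> Lf-lipschitz_on UNIV G)
     \<and> (\<exists>G :: real^('n::{finite,linorder})^('m::{finite,linorder}) \<Rightarrow> real^('n::{finite,linorder})^('m::{finite,linorder}).
          (\<forall>x. (f0 eps Lf has_derivative (\<lambda>h. G x \<bullet> h)) (at x))
          \<and> Lf-lipschitz_on UNIV G)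
     \<and> (\<forall>i\<in>{1..CARD('m)}.
          (50 * pi * eps * sqrt (real CARD('n)) / sqrt (real CARD('m)))-lipschitz_on UNIV
             (fi eps Lf CARD('m) i :: real^('n::{finite,linorder}) \<Rightarrow> real))
     \<and> (50 * pi * eps * sqrt (real CARD('m) * real CARD('n)))-lipschitz_on UNIV
             (f0 eps Lf :: real^('n::{finite,linorder})^('m::{finite,linorder}) \<Rightarrow> real)"
proof -
  let ?m = "CARD('m::{finite,linorder})"
  let ?n = "CARD('n::{finite,linorder})"
  have m0: "0 < ?m" by simp
  have oddn: "odd ?n" using assms(8) .
  define B where "B = 3000 * pi^2 * real ?n * eps^2 / (real ?m * Lf)"
  have gap: "fi eps Lf ?m i (0::real^'n::{finite,linorder}) - fi eps Lf ?m i (z::real^'n::{finite,linorder}) \<le> B" for i z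
    unfolding B_def by (rule fi_props(3)[OF assms(1) assms(3) m0 oddn])
  have Lip: "(50 * pi * eps * sqrt (real ?n) / sqrt (real ?m))-lipschitz_on UNIV
             (fi eps Lf ?m i :: real^'n::{finite,linorder} \<Rightarrow> real)" for i
    by (rule fi_props(2)[OF assms(1) assms(3) m0 oddn])
  have Gex: "\<forall>i. \<exists>G :: real^'n::{finite,linorder} \<Rightarrow> real^'n::{finite,linorder}.
          (\<forall>z. (fi eps Lf ?m i has_derivative (\<lambda>h. G z \<bullet> h)) (at z)) \<and> Lf-lipschitz_on UNIV G"
    using fi_props(1)[OF assms(1) assms(3) m0 oddn] by blast
  then obtain GG :: "nat \<Rightarrow> real^'n::{finite,linorder} \<Rightarrow> real^'n::{finite,linorder}" where
    GG: "\<And>i. (\<forall>z. (fi eps Lf ?m i has_derivative (\<lambda>h. GG i z \<bullet> h)) (at z)) \<and> Lf-lipschitz_on UNIV (GG i)"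
    by metis
  have f0e: "f0 eps Lf = (\<lambda>x::real^'n::{finite,linorder}^'m::{finite,linorder}. \<Sum>k\<in>UNIV. fi eps Lf ?m (pos k) (x $ k))"
    by (rule ext) (simp add: f0_def)
  have a1: "\<forall>i\<in>{1..?m}.
        fi eps Lf ?m i (0::real^'n::{finite,linorder}) - (INF z. fi eps Lf ?m i (z::real^'n::{finite,linorder}))
          \<le> 3000 * pi^2 * real ?n * eps^2 / (real ?m * Lf)"
  proof
    fix i assume "i \<in> {1..?m}"
    have "fi eps Lf ?m i (0::real^'n::{finite,linorder}) - B \<le> (INF z. fi eps Lf ?m i (z::real^'n::{finite,linorder}))"
      by (rule cINF_greatest) (use gap in \<open>auto simp: algebra_simps\<close>)
    then show "fi eps Lf ?m i (0::real^'n::{finite,linorder}) - (INF z. fi eps Lf ?m i (z::real^'n::{finite,linorder}))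
          \<le> 3000 * pi^2 * real ?n * eps^2 / (real ?m * Lf)" unfolding B_def by linarith
  qed
  have mB: "real ?m * B = 3000 * pi^2 * real ?n * eps^2 / Lf"
    unfolding B_def using m0 by (simp add: field_simps)
  have a2: "f0 eps Lf (0::real^'n::{finite,linorder}^'m::{finite,linorder}) - (INF x. f0 eps Lf (x::real^'n::{finite,linorder}^'m::{finite,linorder}))
          \<le> 3000 * pi^2 * real ?n * eps^2 / Lf"
  proof -
    have "f0 eps Lf (0::real^'n::{finite,linorder}^'m::{finite,linorder}) - f0 eps Lf x \<le> real ?m * B" for x :: "real^'n::{finite,linorder}^'m::{finite,linorder}"
    proof -
      have "f0 eps Lf (0::real^'n::{finite,linorder}^'m::{finite,linorder}) - f0 eps Lf x
          = (\<Sum>k\<in>UNIV. fi eps Lf ?m (pos k) (0::real^'n::{finite,linorder}) - fi eps Lf ?m (pos k) (x $ k))"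
        by (simp add: f0e sum_subtractf)
      also have "\<dots> \<le> (\<Sum>k\<in>(UNIV::'m::{finite,linorder} set). B)" by (rule sum_mono) (rule gap)
      also have "\<dots> = real ?m * B" by simp
      finally show ?thesis .
    qed
    then have "f0 eps Lf (0::real^'n::{finite,linorder}^'m::{finite,linorder}) - real ?m * B \<le> (INF x. f0 eps Lf (x::real^'n::{finite,linorder}^'m::{finite,linorder}))"
      by (intro cINF_greatest) (auto simp: algebra_simps)
    then show ?thesis using mB by linarith
  qed
  have b1: "\<forall>i\<in>{1..?m}. \<exists>G :: real^'n::{finite,linorder} \<Rightarrow> real^'n::{finite,linorder}.
          (\<forall>z. (fi eps Lf ?m i has_derivative (\<lambda>h. G z \<bullet> h)) (at z)) \<and> Lf-lipschitz_on UNIV G"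
    using Gex by blast
  define G0 where "G0 x = (\<chi> k. GG (pos k) (x $ k))" for x :: "real^'n::{finite,linorder}^'m::{finite,linorder}"
  have b2der: "(f0 eps Lf has_derivative (\<lambda>h. G0 x \<bullet> h)) (at x)" for x
  proof -
    have d: "((\<lambda>x. fi eps Lf ?m (pos k) (x $ k)) has_derivative (\<lambda>h. GG (pos k) (x $ k) \<bullet> (h $ k))) (at x)" for k
    proof -
      have "(fi eps Lf ?m (pos k) has_derivative (\<lambda>h. GG (pos k) (x $ k) \<bullet> h)) (at (x $ k))"
        using GG[of "pos k"] by blast
      then show ?thesis by (rule has_derivative_compose[OF nth_deriv])
    qed
    have "((\<lambda>x. \<Sum>k\<in>UNIV. fi eps Lf ?m (pos k) (x $ k)) has_derivative (\<lambda>h. \<Sum>k\<in>UNIV. GG (pos k) (x $ k) \<bullet> (h $ k))) (at x)"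
      by (rule has_derivative_sum) (rule d)
    then show ?thesis unfolding f0e
      by (rule has_derivative_eq_rhs) (simp add: fun_eq_iff G0_def inner_vec_def)
  qed
  have b2lip: "Lf-lipschitz_on UNIV G0"
  proof (rule lipschitz_onI)
    fix x y :: "real^'n::{finite,linorder}^'m::{finite,linorder}"
    have "(norm (G0 x - G0 y))^2 = (\<Sum>k\<in>UNIV. (norm (GG (pos k) (x $ k) - GG (pos k) (y $ k)))^2)"
      by (simp add: norm_sq_vec2 G0_def)
    also have "\<dots> \<le> (\<Sum>k\<in>UNIV. (Lf * norm (x $ k - y $ k))^2)"
    proof (rule sum_mono)
      fix k :: "'m::{finite,linorder}"
      have "dist (GG (pos k) (x $ k)) (GG (pos k) (y $ k)) \<le> Lf * dist (x $ k) (y $ k)"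
        using GG[of "pos k"] by (auto dest: lipschitz_onD)
      then show "(norm (GG (pos k) (x $ k) - GG (pos k) (y $ k)))^2 \<le> (Lf * norm (x $ k - y $ k))^2"
        by (simp add: dist_norm power_mono)
    qed
    also have "\<dots> = (Lf * norm (x - y))^2"
      by (simp add: power_mult_distrib norm_sq_vec2 sum_distrib_left)
    finally have "norm (G0 x - G0 y) \<le> Lf * norm (x - y)"
      by (rule power2_le_imp_le) (use assms(3) in simp)
    then show "dist (G0 x) (G0 y) \<le> Lf * dist x y" by (simp add: dist_norm)
  qed (use assms(3) in simp)
  have c1: "\<forall>i\<in>{1..?m}.
          (50 * pi * eps * sqrt (real ?n) / sqrt (real ?m))-lipschitz_on UNIV
             (fi eps Lf ?m i :: real^'n::{finite,linorder} \<Rightarrow> real)"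
    using Lip by blast
  have c2: "(50 * pi * eps * sqrt (real ?m * real ?n))-lipschitz_on UNIV
             (f0 eps Lf :: real^'n::{finite,linorder}^'m::{finite,linorder} \<Rightarrow> real)"
  proof (rule lipschitz_onI)
    fix x y :: "real^'n::{finite,linorder}^'m::{finite,linorder}"
    define M where "M = 50 * pi * eps * sqrt (real ?n) / sqrt (real ?m)"
    have "dist (f0 eps Lf x) (f0 eps Lf y) = \<bar>\<Sum>k\<in>UNIV. fi eps Lf ?m (pos k) (x $ k) - fi eps Lf ?m (pos k) (y $ k)\<bar>"
      by (simp add: f0e dist_real_def sum_subtractf)
    also have "\<dots> \<le> (\<Sum>k\<in>UNIV. \<bar>fi eps Lf ?m (pos k) (x $ k) - fi eps Lf ?m (pos k) (y $ k)\<bar>)"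
      by (rule sum_abs)
    also have "\<dots> \<le> (\<Sum>k\<in>(UNIV::'m::{finite,linorder} set). M * dist x y)"
    proof (rule sum_mono)
      fix k :: "'m::{finite,linorder}"
      have "dist (fi eps Lf ?m (pos k) (x $ k)) (fi eps Lf ?m (pos k) (y $ k)) \<le> M * dist (x $ k) (y $ k)"
        using Lip[of "pos k"] unfolding M_def by (auto dest: lipschitz_onD)
      also have "\<dots> \<le> M * dist x y"
        using Finite_Cartesian_Product.norm_nth_le[of "x - y" k] assms(1) pi_gt_zero
        unfolding M_def dist_norm by (intro mult_left_mono) auto
      finally show "\<bar>fi eps Lf ?m (pos k) (x $ k) - fi eps Lf ?m (pos k) (y $ k)\<bar> \<le> M * dist x y"
        by (simp add: dist_real_def)
    qed
    also have "\<dots> = real ?m * M * dist x y" by simp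
    also have "real ?m * M = 50 * pi * eps * sqrt (real ?m * real ?n)"
    proof -
      have sp: "0 < sqrt (real ?m)" using m0 by simp
      have "real ?m = sqrt (real ?m) * sqrt (real ?m)" using m0 by simp
      then have "real ?m / sqrt (real ?m) = sqrt (real ?m)" using sp by (simp add: field_simps)
      then show ?thesis unfolding M_def by (simp add: real_sqrt_mult field_simps)
    qed
    finally show "dist (f0 eps Lf x) (f0 eps Lf y) \<le> 50 * pi * eps * sqrt (real ?m * real ?n) * dist x y" .
  qed (use assms(1) pi_gt_zero in simp)
  show ?thesis
    using a1 a2 b1 b2der b2lip c1 c2 by blast
qed

end
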